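(* Let $\mathbb{V}$ be a finite set of nodes and $Z\notin\mathbb{V}$ an additional node, and let $\omega$ be a symmetric weight function on pairs of distinct nodes of $\mathbb{V}\cup\{Z\}$. Let $\sigma^*$ be an optimal TSP route (minimum-cost Hamiltonian cycle) over $\mathbb{V}$, and let $P,Q$ be two nodes that are neighbours on $\sigma^*$. Suppose there is no unordered pair $\{A,B\}$ of distinct nodes of $\mathbb{V}$ with $\{A,B\}\neq\{P,Q\}$ such that $$\omega(A,Z)+\omega(B,Z)-\omega(A,B)\le \omega(P,Z)+\omega(Q,Z)-\omega(P,Q).$$ Then the route obtained from $\sigma^*$ by inserting $Z$ between $P$ and $Q$ is an optimal TSP route over $\mathbb{V}\cup\{Z\}$.
   Context: For a set of nodes with weights $\omega$, a route is a cyclic ordering (permutation) $\sigma=(\sigma_1,\dots,\sigma_n)$ of all nodes, with cost $c(\sigma)=\omega(\sigma_n,\sigma_1)+\sum_{i=1}^{n-1}\omega(\sigma_i,\sigma_{i+1})$; a route is optimal if it minimizes this cost among all permutations. Two nodes are neighbours on $\sigma$ if they are consecutive in $\sigma$ or are its first and last element. *)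

theory Defs
  imports Main "HOL.Real"
begin

text \<open>A route over a node set S is a list enumerating S without repetition
(a cyclic ordering). Its cost includes the closing edge from the last to the first node.\<close>

definition is_route :: "'a set \<Rightarrow> 'a list \<Rightarrow> bool" where
  "is_route S \<sigma> \<longleftrightarrow> distinct \<sigma> \<and> set \<sigma> = S"

definition route_cost :: "('a \<Rightarrow> 'a \<Rightarrow> real) \<Rightarrow> 'a list \<Rightarrow> real" where
  "route_cost \<omega> \<sigma> = (\<Sum>i<length \<sigma>. \<omega> (\<sigma> ! i) (\<sigma> ! (Suc i mod length \<sigma>)))"

definition optimal_route :: "('a \<Rightarrow> 'a \<Rightarrow> real) \<Rightarrow> 'a set \<Rightarrow> 'a list \<Rightarrow> bool" where
  "optimal_route \<omega> S \<sigma> \<longleftrightarrow> is_route S \<sigma> \<and> (\<forall>\<tau>. is_route S \<tau> \<longrightarrow> route_cost \<omega> \<sigma> \<le> route_cost \<omega> \<tau>)"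

definition neighbours :: "'a list \<Rightarrow> 'a \<Rightarrow> 'a \<Rightarrow> bool" where
  "neighbours \<sigma> P Q \<longleftrightarrow> (\<exists>i<length \<sigma>.
      (\<sigma> ! i = P \<and> \<sigma> ! (Suc i mod length \<sigma>) = Q) \<or>
      (\<sigma> ! i = Q \<and> \<sigma> ! (Suc i mod length \<sigma>) = P))"

definition insert_after :: "'a list \<Rightarrow> nat \<Rightarrow> 'a \<Rightarrow> 'a list" where
  "insert_after \<sigma> i Z = take (Suc i) \<sigma> @ [Z] @ drop (Suc i) \<sigma>"

end

theory Submission
  imports Defs
begin

fun pc :: "('a \<Rightarrow> 'a \<Rightarrow> real) \<Rightarrow> 'a list \<Rightarrow> real" where
  "pc w [] = 0" | "pc w [x] = 0" | "pc w (x#y#zs) = w x y + pc w (y#zs)"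

lemma pc_sum: "pc w xs = (\<Sum>i<length xs - 1. w (xs!i) (xs!Suc i))"
proof (induction w xs rule: pc.induct)
  case (3 w x y zs)
  have "(\<Sum>i<length (x#y#zs) - 1. w ((x#y#zs)!i) ((x#y#zs)!Suc i))
      = (\<Sum>i<Suc (length zs). w ((x#y#zs)!i) ((x#y#zs)!Suc i))" by simp
  also have "\<dots> = w x y + (\<Sum>i<length zs. w ((y#zs)!i) ((y#zs)!Suc i))"
    by (subst sum.lessThan_Suc_shift) simp
  finally show ?case using 3 by simp
qed auto

lemma pc_append: "xs \<noteq> [] \<Longrightarrow> ys \<noteq> [] \<Longrightarrow> pc w (xs@ys) = pc w xs + w (last xs) (hd ys) + pc w ys"
proof (induction xs)
  case (Cons x xs)
  show ?case
  proof (cases "xs = []")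
    case True then show ?thesis using Cons by (cases ys) auto
  next
    case False
    then obtain a as where "xs = a # as" by (cases xs) auto
    then show ?thesis using Cons False by simp
  qed
qed simp

lemma cost_pc: assumes "xs \<noteq> []" shows "route_cost w xs = pc w xs + w (last xs) (hd xs)"
proof -
  obtain n where n: "length xs = Suc n" using assms by (cases xs) auto
  have "route_cost w xs = (\<Sum>i<Suc n. w (xs ! i) (xs ! (Suc i mod Suc n)))"
    unfolding route_cost_def n by simp
  also have "\<dots> = (\<Sum>i<n. w (xs ! i) (xs ! (Suc i mod Suc n))) + w (xs!n) (xs!0)"
    by simp
  also have "(\<Sum>i<n. w (xs ! i) (xs ! (Suc i mod Suc n))) = (\<Sum>i<n. w (xs ! i) (xs ! Suc i))"
    by (rule sum.cong) auto
  also have "\<dots> = pc w xs" using n by (simp add: pc_sum)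
  also have "xs!n = last xs" using n assms by (simp add: last_conv_nth)
  also have "xs!0 = hd xs" using assms by (simp add: hd_conv_nth)
  finally show ?thesis .
qed

lemma cost_rotate1: "route_cost w (rotate1 xs) = route_cost w xs"
proof (cases xs)
  case (Cons x ys)
  show ?thesis
  proof (cases "ys = []")
    case False
    obtain b bs where ys: "ys = b # bs" using False by (cases ys) auto
    have "route_cost w (rotate1 xs) = pc w (ys@[x]) + w x (hd ys)"
      using Cons False by (simp add: cost_pc)
    also have "\<dots> = pc w ys + w (last ys) x + w x (hd ys)"
      using False by (simp add: pc_append)
    also have "\<dots> = route_cost w xs"
      using Cons ys by (simp add: cost_pc)
    finally show ?thesis .
  qed (simp add: Cons)
qed simp

lemma cost_rotate: "route_cost w (rotate k xs) = route_cost w xs"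
  by (induction k) (simp_all add: cost_rotate1)

lemma cost_cons: assumes "R \<noteq> []"
  shows "route_cost w (Z # R) = route_cost w R + w Z (hd R) + w (last R) Z - w (last R) (hd R)"
proof -
  obtain b bs where "R = b # bs" using assms by (cases R) auto
  then show ?thesis using assms by (simp add: cost_pc)
qed

lemma rot_ins: assumes "i < length s"
  shows "rotate (Suc i) (insert_after s i Z) = Z # rotate (Suc i) s"
proof -
  have l: "length (insert_after s i Z) = Suc (length s)" unfolding insert_after_def using assms by simp
  have "rotate (Suc i) (insert_after s i Z) = drop (Suc i) (insert_after s i Z) @ take (Suc i) (insert_after s i Z)"
    using l assms by (simp add: rotate_drop_take)
  also have "\<dots> = Z # drop (Suc i) s @ take (Suc i) s"
    unfolding insert_after_def using assms by simp
  also have "drop (Suc i) s @ take (Suc i) s = rotate (Suc i) s"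
  proof (cases "Suc i = length s")
    case True then show ?thesis by simp
  next
    case False then show ?thesis using assms by (simp add: rotate_drop_take)
  qed
  finally show ?thesis .
qed

lemma hd_last_rot: assumes "i < length s"
  shows "hd (rotate (Suc i) s) = s ! (Suc i mod length s)" "last (rotate (Suc i) s) = s ! i"
proof -
  let ?m = "Suc i mod length s"
  have rd: "rotate (Suc i) s = drop ?m s @ take ?m s" by (simp add: rotate_drop_take)
  have m: "?m < length s" using assms by (intro mod_less_divisor) auto
  show "hd (rotate (Suc i) s) = s ! ?m" unfolding rd using m
    by (simp add: hd_drop_conv_nth)
  show "last (rotate (Suc i) s) = s ! i"
  proof (cases "Suc i = length s")
    case True
    then have "?m = 0" by simp
    have "s \<noteq> []" using assms by auto
    moreover have "i = length s - 1" using True by simp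
    ultimately have "last s = s ! i" by (simp add: last_conv_nth)
    then show ?thesis unfolding rd using \<open>?m = 0\<close> by simp
  next
    case False
    then have "?m = Suc i" using assms by simp
    have t: "take (Suc i) s \<noteq> []" using assms by (cases s) auto
    have "last (take (Suc i) s) = s ! i" using assms t by (simp add: last_conv_nth)
    then show ?thesis unfolding rd using \<open>?m = Suc i\<close> t by (simp add: last_append)
  qed
qed

theorem proposition2:
  fixes V :: "'a set" and Z P Q :: 'a and \<omega> :: "'a \<Rightarrow> 'a \<Rightarrow> real" and \<sigma> :: "'a list"
  assumes finV: "finite V"
    and Z_notin: "Z \<notin> V"
    and sym: "\<forall>x\<in>insert Z V. \<forall>y\<in>insert Z V. x \<noteq> y \<longrightarrow> \<omega> x y = \<omega> y x"
    and opt: "optimal_route \<omega> V \<sigma>"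
    and PQ: "P \<noteq> Q" "neighbours \<sigma> P Q"
    and unique: "\<not> (\<exists>A\<in>V. \<exists>B\<in>V. A \<noteq> B \<and> {A, B} \<noteq> {P, Q} \<and>
                    \<omega> A Z + \<omega> B Z - \<omega> A B \<le> \<omega> P Z + \<omega> Q Z - \<omega> P Q)"
  shows "\<forall>i<length \<sigma>. {\<sigma> ! i, \<sigma> ! (Suc i mod length \<sigma>)} = {P, Q}
            \<longrightarrow> optimal_route \<omega> (insert Z V) (insert_after \<sigma> i Z)"
proof (intro allI impI)
  fix i assume i: "i < length \<sigma>" and e: "{\<sigma> ! i, \<sigma> ! (Suc i mod length \<sigma>)} = {P, Q}"
  define g where "g A B = \<omega> Z B + \<omega> A Z - \<omega> A B" for A B
  have rs: "is_route V \<sigma>" and minc: "\<And>t. is_route V t \<Longrightarrow> route_cost \<omega> \<sigma> \<le> route_cost \<omega> t"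
    using opt unfolding optimal_route_def by auto
  have ds: "distinct \<sigma>" and ss: "set \<sigma> = V" using rs unfolding is_route_def by auto
  have m2: "\<sigma> ! (Suc i mod length \<sigma>) \<in> set \<sigma>" using i by (intro nth_mem mod_less_divisor) auto
  have m1: "\<sigma> ! i \<in> set \<sigma>" using i by simp
  have PQin: "P \<in> {\<sigma> ! i, \<sigma> ! (Suc i mod length \<sigma>)}" "Q \<in> {\<sigma> ! i, \<sigma> ! (Suc i mod length \<sigma>)}"
    using e by blast+
  have PV: "P \<in> V" "Q \<in> V" using PQin m1 m2 ss by blast+
  have len2: "length \<sigma> \<ge> 2"
  proof (rule ccontr)
    assume "\<not> ?thesis"
    then have "length \<sigma> = 1" using i by simp
    then have "Suc i mod length \<sigma> = i" using i by simp
    then have "P = \<sigma> ! i" "Q = \<sigma> ! i" using PQin by simp_all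
    then show False using PQ(1) by simp
  qed
  have gsym: "g A B = \<omega> A Z + \<omega> B Z - \<omega> A B" if "A \<in> V" "B \<in> V" for A B
  proof -
    have "Z \<noteq> B" using that Z_notin by auto
    then have "\<omega> Z B = \<omega> B Z" using sym[rule_format, of Z B] that(2) by blast
    then show ?thesis unfolding g_def by simp
  qed
  have gPQ: "g (\<sigma>!i) (\<sigma>!(Suc i mod length \<sigma>)) = \<omega> P Z + \<omega> Q Z - \<omega> P Q"
  proof -
    have a: "\<sigma>!i \<in> V" "\<sigma>!(Suc i mod length \<sigma>) \<in> V" using i ss m2 by auto
    have "\<omega> Q P = \<omega> P Q" using sym[rule_format, of Q P] PV PQ(1) by blast
    have "(\<sigma>!i = P \<and> \<sigma>!(Suc i mod length \<sigma>) = Q) \<or> (\<sigma>!i = Q \<and> \<sigma>!(Suc i mod length \<sigma>) = P)"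
      using e unfolding doubleton_eq_iff .
    then show ?thesis using gsym[OF a] \<open>\<omega> Q P = \<omega> P Q\<close> by (elim disjE conjE) simp_all
  qed
  have gge: "g A B \<ge> \<omega> P Z + \<omega> Q Z - \<omega> P Q" if "A \<in> V" "B \<in> V" "A \<noteq> B" for A B
  proof (cases "{A, B} = {P, Q}")
    case True
    have "\<omega> Q P = \<omega> P Q" using sym[rule_format, of Q P] PV PQ(1) by blast
    have "(A = P \<and> B = Q) \<or> (A = Q \<and> B = P)"
      using True unfolding doubleton_eq_iff .
    then show ?thesis using gsym[OF that(1,2)] \<open>\<omega> Q P = \<omega> P Q\<close> by (elim disjE conjE) simp_all
  next
    case False
    have "\<not> (\<omega> A Z + \<omega> B Z - \<omega> A B \<le> \<omega> P Z + \<omega> Q Z - \<omega> P Q)"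
      using unique that False by blast
    then show ?thesis using gsym[OF that(1,2)] by linarith
  qed
  let ?r = "rotate (Suc i) \<sigma>"
  have rne: "?r \<noteq> []" using i by (cases \<sigma>) auto
  have costI: "route_cost \<omega> (insert_after \<sigma> i Z) = route_cost \<omega> \<sigma> + (\<omega> P Z + \<omega> Q Z - \<omega> P Q)"
  proof -
    have "route_cost \<omega> (insert_after \<sigma> i Z) = route_cost \<omega> (rotate (Suc i) (insert_after \<sigma> i Z))"
      by (rule cost_rotate[symmetric])
    also have "\<dots> = route_cost \<omega> (Z # ?r)" by (simp only: rot_ins[OF i])
    also have "\<dots> = route_cost \<omega> \<sigma> + g (last ?r) (hd ?r)"
      using cost_cons[OF rne, of \<omega> Z] cost_rotate[of \<omega> "Suc i" \<sigma>] unfolding g_def by linarith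
    also have "g (last ?r) (hd ?r) = \<omega> P Z + \<omega> Q Z - \<omega> P Q"
      by (simp only: hd_last_rot[OF i] gPQ)
    finally show ?thesis .
  qed
  have routeI: "is_route (insert Z V) (insert_after \<sigma> i Z)"
  proof -
    have "distinct (rotate (Suc i) (insert_after \<sigma> i Z))" "set (rotate (Suc i) (insert_after \<sigma> i Z)) = insert Z V"
      unfolding rot_ins[OF i] using ds ss Z_notin by (simp_all del: rotate_Suc)
    then show ?thesis unfolding is_route_def by simp
  qed
  show "optimal_route \<omega> (insert Z V) (insert_after \<sigma> i Z)"
    unfolding optimal_route_def
  proof (intro conjI allI impI routeI)
    fix t assume t: "is_route (insert Z V) t"
    have dt: "distinct t" and st: "set t = insert Z V" using t unfolding is_route_def by auto
    obtain k where k: "k < length t" "t ! k = Z" using st by (metis insertI1 in_set_conv_nth)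
    let ?u = "rotate k t"
    have hu: "hd ?u = Z" using k by (simp add: rotate_drop_take hd_drop_conv_nth)
    have une: "?u \<noteq> []" using k by (cases t) auto
    then obtain R where u: "?u = Z # R" using hu by (cases ?u) auto
    have dR: "distinct R" and sR: "set R = V"
    proof -
      have "distinct (Z # R)" "set (Z # R) = insert Z V" using dt st by (simp_all flip: u)
      then show "distinct R" "set R = V" using Z_notin by auto
    qed
    have lR: "length R \<ge> 2"
    proof -
      have "length R = card V" using dR sR distinct_card by fastforce
      also have "card V = length \<sigma>" using ds ss distinct_card by fastforce
      finally show ?thesis using len2 by simp
    qed
    have Rne: "R \<noteq> []" using lR by auto
    have hl: "last R \<noteq> hd R"
    proof -
      have "last R = R ! (length R - 1)" "hd R = R ! 0" using Rne by (simp_all add: last_conv_nth hd_conv_nth)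
      moreover have "R ! (length R - 1) \<noteq> R ! 0" using nth_eq_iff_index_eq[OF dR, of "length R - 1" 0] lR Rne by simp
      ultimately show ?thesis by simp
    qed
    have inV: "last R \<in> V" "hd R \<in> V" using sR Rne by auto
    have "route_cost \<omega> t = route_cost \<omega> (Z # R)" using cost_rotate[of \<omega> k t] u by simp
    also have "\<dots> = route_cost \<omega> R + g (last R) (hd R)" using cost_cons[OF Rne] unfolding g_def by simp
    finally have ct: "route_cost \<omega> t = route_cost \<omega> R + g (last R) (hd R)" .
    have "route_cost \<omega> \<sigma> \<le> route_cost \<omega> R" using minc dR sR unfolding is_route_def by auto
    then show "route_cost \<omega> (insert_after \<sigma> i Z) \<le> route_cost \<omega> t"
      using ct costI gge[OF inV hl] by simp
  qed
qed

end
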